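(* Let $n$ be odd and let $p$ be an odd prime with $p\nmid n$, $p\equiv\delta\pmod 4$ with $\delta\in\{1,-1\}$, and put $t=(p-\delta)/4$. Let $m$ be an odd positive integer with $pm\equiv1\pmod n$, and let $a_1,\dots,a_t$ be nonnegative integers such that $pa_1,\dots,pa_t$ are congruent mod $n$ to $1,3,\dots,(p-3)/2$ respectively if $\delta=1$, and to $0,2,\dots,(p-3)/2$ respectively if $\delta=-1$. Let $$H(x)=\frac{x^m+1}{x+1}\left(x^{a_1}+\cdots+x^{a_t}\right),\quad f=\delta+(x^n+1)H(x),\quad g=(x^n+1)H(x).$$ Then $M_{Q_{4n}}(f+yg)=\delta p$.
   Context: $Q_{4n}=\langle x,y : x^{2n}=1,\ y^2=x^n,\ xy=yx^{-1}\rangle$. For $f,g\in\mathbb Z[x]$, $M_{Q_{4n}}(f+yg)=\prod_{z^{2n}=1}\big(f(z)f(z^{-1})-z^ng(z)g(z^{-1})\big)$, which is the integer group determinant of $Q_{4n}$ with entries given by the coefficients of $f,g$ reduced mod $x^{2n}-1$. *)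

theory Defs
  imports Complex_Main "HOL-Computational_Algebra.Polynomial" "HOL-Computational_Algebra.Primes" "HOL-Number_Theory.Cong"
begin

text \<open>Integer group determinant of Q_{4n} at the element f + y g, via the product formula:
  M(f + y g) = prod over z with z^(2n) = 1 of f(z) f(1/z) - z^n g(z) g(1/z).\<close>
definition evalc :: "int poly \<Rightarrow> complex \<Rightarrow> complex" where
  "evalc f z = poly (map_poly of_int f) z"

definition M_Q4n :: "nat \<Rightarrow> int poly \<Rightarrow> int poly \<Rightarrow> complex" where
  "M_Q4n n f g = (\<Prod>z\<in>{z::complex. z ^ (2*n) = 1}.
      evalc f z * evalc f (inverse z) - z ^ n * evalc g z * evalc g (inverse z))"

end

theory Submission
  imports Defs
begin

lemma L1: "(1+w) * (\<Sum>k<N. w^(2*k)) = (\<Sum>j<2*N. (w::complex)^j)"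
  by (induction N) (simp_all add: algebra_simps)
lemma L2: "(1+w) * (\<Sum>j<N+1. w^j) = 1 + w^(N+1) + 2*(\<Sum>j<N. (w::complex)^(j+1))"
  by (induction N) (simp_all add: algebra_simps)
lemma geo: "(\<Sum>j<k. w^j) * (w - 1) = (w::complex)^k - 1"
  by (induction k) (simp_all add: algebra_simps)
lemma pow_cong: assumes "(w::complex)^n = 1" "[a = b] (mod n)" shows "w^a = w^b"
proof -
  have "w^x = w^(x mod n)" for x
  proof -
    have "w^x = w^(n*(x div n) + x mod n)" by simp
    also have "\<dots> = (w^n)^(x div n) * w^(x mod n)" by (simp only: power_add power_mult)
    finally show ?thesis using assms by simp
  qed
  then show ?thesis using assms by (metis cong_def)
qed
lemma LA: fixes w :: complex assumes "p = 4*t+1"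
  shows "1 + w^p + 2*(1+w)*((\<Sum>i=1..t. w^(2*i-1)) + (\<Sum>i=1..t. w^(p-1-(2*i-1))))
     = (1+w)*(\<Sum>j<p. w^j)"
proof -
  have S0: "(\<Sum>i=1..t. w^(2*i-1)) = (\<Sum>i=1..t. w^(2*(i-1)+1))"
    by (intro sum.cong refl arg_cong[where f="\<lambda>e. w^e"]) auto
  have S1: "(\<Sum>i=1..t. w^(2*i-1)) = (\<Sum>k\<in>{0..<t}. w^(2*k+1))"
    unfolding S0 by (rule sum.reindex_bij_witness[of _ "\<lambda>k. k+1" "\<lambda>i. i-1"]) auto
  have S2': "(\<Sum>i=1..t. w^(p-1-(2*i-1))) = (\<Sum>i=1..t. w^(2*(2*t-i)+1))"
    using assms by (intro sum.cong refl arg_cong[where f="\<lambda>e. w^e"]) auto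
  have S2: "(\<Sum>i=1..t. w^(p-1-(2*i-1))) = (\<Sum>k\<in>{t..<2*t}. w^(2*k+1))"
    unfolding S2' apply (rule sum.reindex_bij_witness[of _ "\<lambda>k. 2*t-k" "\<lambda>i. 2*t-i"])
    using assms by (auto intro!: arg_cong[where f="\<lambda>e. w^e"])
  have "(\<Sum>i=1..t. w^(2*i-1)) + (\<Sum>i=1..t. w^(p-1-(2*i-1))) = (\<Sum>k<2*t. w^(2*k+1))"
    unfolding S1 S2 by (simp add: sum.atLeastLessThan_concat atLeast0LessThan[symmetric])
  also have "\<dots> = w * (\<Sum>k<2*t. w^(2*k))" by (simp add: sum_distrib_left algebra_simps)
  finally have F: "(\<Sum>i=1..t. w^(2*i-1)) + (\<Sum>i=1..t. w^(p-1-(2*i-1))) = w * (\<Sum>k<2*t. w^(2*k))" .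
  have "(1+w)*((\<Sum>i=1..t. w^(2*i-1)) + (\<Sum>i=1..t. w^(p-1-(2*i-1)))) = w*((1+w)*(\<Sum>k<2*t. w^(2*k)))"
    by (subst F) (rule mult.left_commute)
  also have "\<dots> = w * (\<Sum>j<2*(2*t). w^j)" by (simp only: L1)
  also have "\<dots> = (\<Sum>j<4*t. w^(j+1))" by (simp add: sum_distrib_left)
  finally have E: "(1+w)*((\<Sum>i=1..t. w^(2*i-1)) + (\<Sum>i=1..t. w^(p-1-(2*i-1)))) = (\<Sum>j<4*t. w^(j+1))" .
  have "1 + w^p + 2*(1+w)*((\<Sum>i=1..t. w^(2*i-1)) + (\<Sum>i=1..t. w^(p-1-(2*i-1))))
     = 1 + w^(4*t+1) + 2*(\<Sum>j<4*t. w^(j+1))" using E by (simp only: mult.assoc assms)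
  also have "\<dots> = (1+w)*(\<Sum>j<4*t+1. w^j)" by (rule L2[symmetric])
  finally show ?thesis unfolding assms .
qed
lemma LB: fixes w :: complex assumes "p = 4*s+3" "t = s+1"
  shows "1 + w^p - 2*(1+w)*((\<Sum>i=1..t. w^(2*(i-1))) + (\<Sum>i=1..t. w^(p-1-2*(i-1))))
     = -((1+w)*(\<Sum>j<p. w^j))"
proof -
  have S1: "(\<Sum>i=1..t. w^(2*(i-1))) = (\<Sum>k\<in>{0..<t}. w^(2*k))"
    by (rule sum.reindex_bij_witness[of _ "\<lambda>k. k+1" "\<lambda>i. i-1"]) auto
  have S2': "(\<Sum>i=1..t. w^(p-1-2*(i-1))) = (\<Sum>i=1..t. w^(2*(2*t-i)))"
    using assms by (intro sum.cong refl arg_cong[where f="\<lambda>e. w^e"]) auto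
  have S2: "(\<Sum>i=1..t. w^(p-1-2*(i-1))) = (\<Sum>k\<in>{t..<2*t}. w^(2*k))"
    unfolding S2' apply (rule sum.reindex_bij_witness[of _ "\<lambda>k. 2*t-k" "\<lambda>i. 2*t-i"])
    using assms by (auto intro!: arg_cong[where f="\<lambda>e. w^e"])
  have "(\<Sum>i=1..t. w^(2*(i-1))) + (\<Sum>i=1..t. w^(p-1-2*(i-1))) = (\<Sum>k<2*t. w^(2*k))"
    unfolding S1 S2 by (simp add: sum.atLeastLessThan_concat atLeast0LessThan[symmetric])
  then have E0: "(1+w)*((\<Sum>i=1..t. w^(2*(i-1))) + (\<Sum>i=1..t. w^(p-1-2*(i-1)))) = (\<Sum>j<2*(2*t). w^j)"
    using L1[of w "2*t"] by simp
  have "2*(2*t) = 4*s+4" using assms by simp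
  with E0 have E: "(1+w)*((\<Sum>i=1..t. w^(2*(i-1))) + (\<Sum>i=1..t. w^(p-1-2*(i-1)))) = (\<Sum>j<4*s+4. w^j)"
    by simp
  have E2a: "(\<Sum>j<Suc (Suc (4*s+2)). w^j) = 1 + (\<Sum>j<Suc (4*s+2). w^(j+1))"
    by (simp only: sum.lessThan_Suc_shift) simp
  have E2b: "(\<Sum>j<Suc (4*s+2). w^(j+1)) = (\<Sum>j<4*s+2. w^(j+1)) + w^p"
  proof -
    have pp: "p = Suc (4*s+2)" using assms by simp
    show ?thesis unfolding pp by (simp only: sum.lessThan_Suc) simp
  qed
  have E2: "(\<Sum>j<4*s+4. w^j) = 1 + (\<Sum>j<4*s+2. w^(j+1)) + w^p"
    using E2a E2b by (simp add: numeral_eq_Suc)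
  have E3: "(1+w)*(\<Sum>j<p. w^j) = 1 + w^p + 2*(\<Sum>j<4*s+2. w^(j+1))"
  proof -
    have pp: "p = 4*s+2+1" using assms by simp
    show ?thesis unfolding pp by (rule L2)
  qed
  have G: "1 + w^p - 2*(1+w)*((\<Sum>i=1..t. w^(2*(i-1))) + (\<Sum>i=1..t. w^(p-1-2*(i-1))))
     = 1 + w^p - 2*(1 + (\<Sum>j<4*s+2. w^(j+1)) + w^p)" by (simp only: mult.assoc E E2)
  show ?thesis by (simp only: G E3) (simp add: algebra_simps)
qed


lemma mp_add: "map_poly (of_int::int\<Rightarrow>complex) (p+q) = map_poly of_int p + map_poly of_int q"
  by (intro poly_eqI) (simp add: coeff_map_poly)
lemma mp_mult: "map_poly (of_int::int\<Rightarrow>complex) (p*q) = map_poly of_int p * map_poly of_int q"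
  by (intro poly_eqI) (simp add: coeff_map_poly coeff_mult)
lemma ev_mult: "evalc (p*q) z = evalc p z * evalc q z" unfolding evalc_def by (simp add: mp_mult)
lemma ev_add: "evalc (p+q) z = evalc p z + evalc q z" unfolding evalc_def by (simp add: mp_add)
lemma ev_monom: "evalc (monom 1 k) z = z^k" unfolding evalc_def by (simp add: map_poly_monom poly_monom)
lemma ev_const: "evalc [:d:] z = of_int d" unfolding evalc_def by (simp add: map_poly_pCons)
lemma ev_lin: "evalc [:1,1:] z = 1 + z" unfolding evalc_def by (simp add: map_poly_pCons)
lemma ev_one: "evalc 1 z = 1" unfolding evalc_def by simp
lemma ev_sum: "evalc (sum f A) z = (\<Sum>i\<in>A. evalc (f i) z)" 
  by (induction A rule: infinite_finite_induct) (simp_all add: ev_add evalc_def[of 0])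

lemma key_w: fixes w :: complex assumes "w \<noteq> 0" "c \<le> p - 1" "p \<ge> 1"
  shows "w^p * (1 + inverse w) * inverse w ^ c = (w + 1) * w^(p-1-c)"
proof -
  have pe: "p = (p-1-c) + c + 1" using assms by simp
  have "w^p = w^(p-1-c) * w^c * w" by (subst pe) (simp only: power_add power_one_right)
  then show ?thesis using assms by (simp add: field_simps power_inverse)
qed

theorem lemma5p3:
  fixes n p m t :: nat and \<delta> :: int and a :: "nat \<Rightarrow> nat" and H f g :: "int poly"
  assumes "odd n"
    and "prime p" and "odd p" and "\<not> p dvd n"
    and "\<delta> \<in> {1, -1}" and "[int p = \<delta>] (mod 4)"
    and "int t = (int p - \<delta>) div 4"
    and "odd m" and "m > 0" and "[p * m = 1] (mod n)"
    and "\<delta> = 1 \<Longrightarrow> \<forall>i\<in>{1..t}. [p * a i = 2 * i - 1] (mod n)"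
    and "\<delta> = -1 \<Longrightarrow> \<forall>i\<in>{1..t}. [p * a i = 2 * (i - 1)] (mod n)"
    and "H = ((monom 1 m + 1) div [:1, 1:]) * (\<Sum>i=1..t. monom 1 (a i))"
    and "f = [:\<delta>:] + (monom 1 n + 1) * H"
    and "g = (monom 1 n + 1) * H"
  shows "M_Q4n n f g = of_int (\<delta> * int p)"
proof -
  note A = assms
  define q where "q = (monom 1 m + 1) div [:1,1::int:]"
  define c :: complex where "c = of_int \<delta>"
  have cc: "c * c = 1" using A(5) unfolding c_def by auto
  have npos: "n \<ge> 1" using A(1) by (cases n) auto
  have p1: "p \<ge> 1" using prime_gt_0_nat[OF A(2)] by simp
  have qdvd: "[:1,1:] dvd (monom 1 m + 1 :: int poly)"
  proof -
    have "poly (monom 1 m + 1 :: int poly) (-1) = 0" using A(8) by (simp add: poly_monom)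
    then show ?thesis using poly_eq_0_iff_dvd[of "monom 1 m + 1 :: int poly" "-1"] by simp
  qed
  have qmul: "q * [:1,1:] = monom 1 m + 1" unfolding q_def by (rule dvd_div_mult_self[OF qdvd])
  have evq: "evalc q z * (1 + z) = z^m + 1" for z
  proof -
    have "evalc q z * (1 + z) = evalc (q*[:1,1:]) z" by (simp only: ev_mult ev_lin)
    also have "\<dots> = evalc (monom 1 m + 1) z" by (simp only: qmul)
    also have "\<dots> = z^m + 1" by (simp add: ev_add ev_monom ev_one)
    finally show ?thesis .
  qed
  define h where "h z = evalc q z * (\<Sum>i=1..t. z^(a i))" for z
  have evH: "evalc H z = h z" for z
    unfolding A(13) h_def q_def[symmetric] by (simp add: ev_mult ev_sum ev_monom)
  have evf: "evalc f z = c + (z^n+1) * h z" for z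
    unfolding A(14) by (simp add: ev_mult ev_add ev_monom ev_one ev_const evH c_def)
  have evg: "evalc g z = (z^n+1) * h z" for z
    unfolding A(15) by (simp add: ev_mult ev_add ev_monom ev_one evH)
  define R where "R = {z::complex. z^n = 1}"
  define R2 where "R2 = {z::complex. z^(2*n) = 1}"
  have finR: "finite R" unfolding R_def using npos by (intro finite_roots_unity) 
  have finR2: "finite R2" unfolding R2_def using npos by (intro finite_roots_unity) simp
  define K where "K z = 1 + 2*c*(h z + h (inverse z))" for z
  have step1: "M_Q4n n f g = (\<Prod>z\<in>R2. 1 + c*(z^n+1)*(h z + h (inverse z)))"
    unfolding M_Q4n_def R2_def[symmetric]
  proof (rule prod.cong[OF refl])
    fix z assume "z \<in> R2"
    then have zz: "z^n * z^n = 1" unfolding R2_def by (simp add: mult_2 power_add)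
    then have zi: "inverse z ^ n = z^n" by (metis inverse_unique power_inverse)
    define s where "s = z^n"
    have ss: "s*s = 1" using zz s_def by simp
    show "evalc f z * evalc f (inverse z) - z ^ n * evalc g z * evalc g (inverse z)
        = 1 + c*(z^n+1)*(h z + h (inverse z))"
      unfolding evf evg zi s_def[symmetric] using ss cc by algebra
  qed
  have step2: "(\<Prod>z\<in>R2. 1 + c*(z^n+1)*(h z + h (inverse z))) = (\<Prod>z\<in>R. K z)"
  proof (rule prod.mono_neutral_cong_right[OF finR2])
    show "R \<subseteq> R2" unfolding R_def R2_def by (auto simp: mult_2 power_add)
    show "\<forall>x\<in>R2 - R. 1 + c*(x^n+1)*(h x + h (inverse x)) = 1"
    proof
      fix x assume "x \<in> R2 - R"
      then have xx: "x^n * x^n = 1" "x^n \<noteq> 1" unfolding R_def R2_def by (simp_all add: mult_2 power_add)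
      have "(x^n - 1) * (x^n + 1) = x^n * x^n - 1" by (simp add: algebra_simps)
      with xx have "(x^n - 1) * (x^n + 1) = 0" "x^n \<noteq> 1" by simp_all
      then have "x^n + 1 = 0" by auto
      then show "1 + c*(x^n+1)*(h x + h (inverse x)) = 1" by simp
    qed
    show "\<And>x. x \<in> R \<Longrightarrow> 1 + c*(x^n+1)*(h x + h (inverse x)) = K x"
      unfolding R_def K_def by simp
  qed
  have pm: "(w^p)^m = w" if "w \<in> R" for w
  proof -
    have "(w^p)^m = w^(p*m)" by (simp add: power_mult)
    also have "\<dots> = w^1" using that A(10) unfolding R_def by (intro pow_cong) auto
    finally show ?thesis by simp
  qed
  have mp: "(w^m)^p = w" if "w \<in> R" for w
    using pm[OF that] by (metis power_mult mult.commute)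
  have inR: "w^k \<in> R" if "w \<in> R" for w k
  proof -
    have "(w^k)^n = (w^n)^k" by (simp only: power_mult[symmetric] mult.commute)
    then show ?thesis using that unfolding R_def by simp
  qed
  have bij1: "bij_betw (\<lambda>w. w^p) R R"
  proof (rule bij_betw_imageI)
    show "inj_on (\<lambda>w. w^p) R" by (intro inj_onI) (metis pm)
    show "(\<lambda>w. w^p) ` R = R"
    proof
      show "(\<lambda>w. w^p) ` R \<subseteq> R" using inR by auto
      show "R \<subseteq> (\<lambda>w. w^p) ` R"
      proof
        fix z assume "z \<in> R" then show "z \<in> (\<lambda>w. w^p) ` R" using mp inR by (metis image_eqI)
      qed
    qed
  qed
  have bij2: "bij_betw (\<lambda>w. w^p) (R - {1}) (R - {1})"
  proof (rule bij_betw_imageI)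
    show "inj_on (\<lambda>w. w^p) (R-{1})" by (intro inj_onI) (metis pm DiffD1)
    show "(\<lambda>w. w^p) ` (R-{1}) = R-{1}"
    proof
      show "(\<lambda>w. w^p) ` (R-{1}) \<subseteq> R-{1}"
      proof
        fix y assume "y \<in> (\<lambda>w. w^p) ` (R-{1})"
        then obtain w where w: "w \<in> R" "w \<noteq> 1" "y = w^p" by auto
        have "w^p \<noteq> 1"
        proof
          assume "w^p = 1" then have "(w^p)^m = 1" by simp
          with pm[OF w(1)] w(2) show False by simp
        qed
        then show "y \<in> R-{1}" using inR[OF w(1)] w(3) by simp
      qed
      show "R-{1} \<subseteq> (\<lambda>w. w^p) ` (R-{1})"
      proof
        fix z assume z: "z \<in> R-{1}"
        have "z^m \<noteq> 1"
        proof
          assume "z^m = 1" then have "(z^m)^p = 1" by simp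
          with mp z show False by simp
        qed
        then have "z^m \<in> R - {1}" using inR z by simp
        then show "z \<in> (\<lambda>w. w^p) ` (R-{1})" using mp z by (metis image_eqI DiffD1)
      qed
    qed
  qed
  have step3: "(\<Prod>z\<in>R. K z) = (\<Prod>w\<in>R. K (w^p))"
    using prod.reindex_bij_betw[OF bij1, of K] by simp
  define ci where "ci i = (if \<delta> = 1 then 2*i-1 else 2*(i-1))" for i :: nat
  have ptd: "(\<delta> = 1 \<and> p = 4*t+1) \<or> (\<delta> = -1 \<and> t \<ge> 1 \<and> p = 4*(t-1)+3)"
  proof -
    have "4 dvd (int p - \<delta>)" using A(6) by (simp add: cong_iff_dvd_diff)
    then have "(int p - \<delta>) div 4 * 4 = int p - \<delta>" by (rule dvd_div_mult_self)
    then have e: "int t * 4 = int p - \<delta>" using A(7) by simp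
    show ?thesis using A(5) e p1 by auto
  qed
  have cong_ci: "[p * a i = ci i] (mod n)" if "i \<in> {1..t}" for i
    using A(5,11,12) that unfolding ci_def by auto
  have ci_le: "ci i \<le> p - 1" if "i \<in> {1..t}" for i
    using ptd that unfolding ci_def by auto
  define G where "G w = (\<Sum>j<p. w^j)" for w :: complex
  have step4: "K (w^p) * (1 + w^p) = c * (1 + w) * G w" if w: "w \<in> R" for w
  proof -
    have w0: "w \<noteq> 0"
    proof
      assume "w = 0" then have "w^n = 0" using npos by simp
      with w show False unfolding R_def by simp
    qed
    define u where "u = inverse w"
    have uR: "u \<in> R"
    proof -
      have "u ^ n = inverse (w^n)" unfolding u_def by (rule power_inverse)
      then show ?thesis using w unfolding R_def by simp
    qed
    have S1: "(\<Sum>i=1..t. (w^p)^(a i)) = (\<Sum>i=1..t. w^(ci i))"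
    proof (rule sum.cong[OF refl])
      fix i assume i: "i \<in> {1..t}"
      have "(w^p)^(a i) = w^(p * a i)" by (simp only: power_mult)
      also have "\<dots> = w^(ci i)" using w cong_ci[OF i] unfolding R_def by (intro pow_cong) auto
      finally show "(w^p)^(a i) = w^(ci i)" .
    qed
    have S2: "(\<Sum>i=1..t. (u^p)^(a i)) = (\<Sum>i=1..t. u^(ci i))"
    proof (rule sum.cong[OF refl])
      fix i assume i: "i \<in> {1..t}"
      have "(u^p)^(a i) = u^(p * a i)" by (simp only: power_mult)
      also have "\<dots> = u^(ci i)" using uR cong_ci[OF i] unfolding R_def by (intro pow_cong) auto
      finally show "(u^p)^(a i) = u^(ci i)" .
    qed
    have hw: "h (w^p) * (1 + w^p) = (1 + w) * (\<Sum>i=1..t. w^(ci i))"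
    proof -
      have "h (w^p) * (1 + w^p) = (evalc q (w^p) * (1 + w^p)) * (\<Sum>i=1..t. (w^p)^(a i))"
        unfolding h_def by (simp add: algebra_simps)
      also have "\<dots> = (1 + w) * (\<Sum>i=1..t. w^(ci i))" unfolding evq S1 pm[OF w] by simp
      finally show ?thesis .
    qed
    have iw: "inverse (w^p) = u^p" unfolding u_def by (simp add: power_inverse)
    have wu: "1 + w^p = w^p * (1 + u^p)" unfolding u_def using w0 by (simp add: field_simps power_inverse)
    have hu: "h (inverse (w^p)) * (1 + w^p) = (1 + w) * (\<Sum>i=1..t. w^(p-1-ci i))"
    proof -
      have "h (inverse (w^p)) * (1 + w^p) = w^p * (evalc q (u^p) * (1 + u^p)) * (\<Sum>i=1..t. (u^p)^(a i))"
        unfolding h_def iw wu by (simp add: algebra_simps)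
      also have "\<dots> = (\<Sum>i=1..t. w^p * (1 + inverse w) * inverse w ^ (ci i))"
        unfolding evq S2 pm[OF uR] by (simp add: sum_distrib_left u_def algebra_simps)
      also have "\<dots> = (\<Sum>i=1..t. (w + 1) * w^(p-1-ci i))"
        by (intro sum.cong refl key_w w0 p1 ci_le)
      finally show ?thesis by (simp add: sum_distrib_left algebra_simps)
    qed
    have "K (w^p) * (1 + w^p) = 1 + w^p + 2*c*(h (w^p) * (1 + w^p) + h (inverse (w^p)) * (1 + w^p))"
      unfolding K_def by (simp add: algebra_simps)
    also have "\<dots> = 1 + w^p + 2*c*(1+w)*((\<Sum>i=1..t. w^(ci i)) + (\<Sum>i=1..t. w^(p-1-ci i)))"
      unfolding hw hu by (simp add: algebra_simps)
    also have "\<dots> = c * (1 + w) * G w"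
    proof (cases "\<delta> = 1")
      case True
      then have pt: "p = 4*t+1" and c1: "c = 1" using ptd c_def by auto
      have "ci i = 2*i-1" for i using True ci_def by simp
      then show ?thesis using LA[OF pt, of w] unfolding c1 G_def by simp
    next
      case False
      then have d: "\<delta> = -1" "p = 4*(t-1)+3" "t = (t-1)+1" and c1: "c = -1" using ptd c_def by auto
      have cieq: "ci i = 2*(i-1)" for i using d ci_def by simp
      define Y where "Y = (\<Sum>i=1..t. w^(2*(i-1))) + (\<Sum>i=1..t. w^(p-1-2*(i-1)))"
      have "1 + w^p + 2*c*(1+w)*((\<Sum>i=1..t. w^(ci i)) + (\<Sum>i=1..t. w^(p-1-ci i)))
          = 1 + w^p + 2*(-1)*(1+w)*Y" unfolding cieq c1 Y_def ..
      also have "\<dots> = 1 + w^p - 2*(1+w)*Y" by (simp add: algebra_simps)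
      also have "\<dots> = -((1+w)*(\<Sum>j<p. w^j))" unfolding Y_def by (rule LB[OF d(2,3)])
      also have "\<dots> = c * (1 + w) * G w" unfolding c1 G_def by (simp add: algebra_simps)
      finally show ?thesis .
    qed
    finally show ?thesis .
  qed
  have nz1: "(\<Prod>w\<in>R. 1 + w) \<noteq> 0"
  proof -
    have "1 + w \<noteq> 0" if "w \<in> R" for w
    proof
      assume "1 + w = 0" then have "w = -1" by (simp add: add_eq_0_iff)
      with that A(1) show False unfolding R_def by simp
    qed
    then show ?thesis using finR by simp
  qed
  have re1: "(\<Prod>w\<in>R. 1 + w^p) = (\<Prod>w\<in>R. 1 + w)"
    using prod.reindex_bij_betw[OF bij1, of "\<lambda>w. 1 + w"] by simp
  have cardR: "card R = n" unfolding R_def using npos by (intro card_roots_unity_eq) simp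
  have cn: "c ^ n = c" using A(5) A(1) unfolding c_def by auto
  have "(\<Prod>w\<in>R. K (w^p)) * (\<Prod>w\<in>R. 1 + w) = (\<Prod>w\<in>R. K (w^p) * (1 + w^p))"
    by (simp add: prod.distrib re1)
  also have "\<dots> = (\<Prod>w\<in>R. c * (1 + w) * G w)" by (intro prod.cong refl step4)
  also have "\<dots> = c * (\<Prod>w\<in>R. 1 + w) * (\<Prod>w\<in>R. G w)"
    by (simp add: prod.distrib cardR cn)
  finally have step5: "(\<Prod>w\<in>R. K (w^p)) = c * (\<Prod>w\<in>R. G w)"
    using nz1 by (simp add: algebra_simps)
  have oneR: "1 \<in> R" unfolding R_def by simp
  have G1: "G 1 = of_nat p" unfolding G_def by simp
  have nz2: "(\<Prod>w\<in>R-{1}. w - 1) \<noteq> 0" using finR by simp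
  have "(\<Prod>w\<in>R-{1}. G w) * (\<Prod>w\<in>R-{1}. w - 1) = (\<Prod>w\<in>R-{1}. w^p - 1)"
    unfolding prod.distrib[symmetric] G_def by (simp add: geo)
  also have "\<dots> = (\<Prod>w\<in>R-{1}. w - 1)"
    using prod.reindex_bij_betw[OF bij2, of "\<lambda>w. w - 1"] by simp
  finally have "(\<Prod>w\<in>R-{1}. G w) = 1" using nz2 by simp
  then have step6: "(\<Prod>w\<in>R. G w) = of_nat p"
    using prod.remove[OF finR oneR, of G] G1 by simp
  show ?thesis
  proof -
    have "M_Q4n n f g = c * of_nat p" using step1 step2 step3 step5 step6 by simp
    then show ?thesis by (simp add: c_def)
  qed
qed

end
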